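(* Let $p,n\ge1$ and let $u_j,v_j\in E^p$ for $j=1,\dots,n$. Put $u=\sum_{j=1}^n u_j$ and $v=\sum_{j=1}^n v_j$. Then $$D(u,v)\le\sum_{j=1}^n D(u_j,v_j).$$
   Context: A fuzzy subset of $\mathbb{R}^p$ is a function $u:\mathbb{R}^p\to[0,1]$. Its $\alpha$-cut is $[u]_\alpha=\{x\in\mathbb{R}^p: u(x)\ge\alpha\}$ for $\alpha\in(0,1]$, and $[u]_0=\overline{\{x\in\mathbb{R}^p: u(x)>0\}}$. The set $E^p$ of $p$-dimensional fuzzy numbers consists of all fuzzy subsets $u$ of $\mathbb{R}^p$ such that $[u]_\alpha$ is a nonempty compact convex subset of $\mathbb{R}^p$ for every $\alpha\in[0,1]$. For $u,v\in E^p$, $u+v$ is the element of $E^p$ determined by $[u+v]_\alpha=\{x+y: x\in[u]_\alpha,\ y\in[v]_\alpha\}$ for all $\alpha\in[0,1]$. The sendograph of $u\in E^p$ is $\mathrm{send}\,u=\{(x,\alpha)\in[u]_0\times[0,1]: u(x)\ge\alpha\}\subset\mathbb{R}^{p+1}$. For nonempty compact $U,V\subset\mathbb{R}^{p+1}$ (with the Euclidean metric $d$), the Hausdorff metric is $H(U,V)=\max\{H^*(U,V),H^*(V,U)\}$ with $H^*(U,V)=\sup_{a\in U}\inf_{b\in V}d(a,b)$. The sendograph metric on $E^p$ is $D(u,v)=H(\mathrm{send}\,u,\mathrm{send}\,v)$. *)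

theory Defs
  imports "HOL-Analysis.Analysis"
begin

text \<open>Fuzzy subsets of R^p are modelled as functions 'a \<Rightarrow> real on a Euclidean space 'a
  (dimension p = DIM('a) \<ge> 1), with values in [0,1].\<close>

definition fcut :: "('a::euclidean_space \<Rightarrow> real) \<Rightarrow> real \<Rightarrow> 'a set" where
  "fcut u \<alpha> = (if \<alpha> = 0 then closure {x. u x > 0} else {x. u x \<ge> \<alpha>})"

definition fuzzy_number :: "('a::euclidean_space \<Rightarrow> real) \<Rightarrow> bool" where
  "fuzzy_number u \<longleftrightarrow> (\<forall>x. 0 \<le> u x \<and> u x \<le> 1) \<and>
     (\<forall>\<alpha>\<in>{0..1}. fcut u \<alpha> \<noteq> {} \<and> compact (fcut u \<alpha>) \<and> convex (fcut u \<alpha>))"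

definition set_plus :: "'a::euclidean_space set \<Rightarrow> 'a set \<Rightarrow> 'a set" where
  "set_plus A B = {x + y | x y. x \<in> A \<and> y \<in> B}"

text \<open>Sum of fuzzy numbers: the fuzzy set whose alpha-cuts are the Minkowski sums of the
  alpha-cuts (for fuzzy numbers this is the unique element of E^p so determined).\<close>
definition fadd :: "('a::euclidean_space \<Rightarrow> real) \<Rightarrow> ('a \<Rightarrow> real) \<Rightarrow> ('a \<Rightarrow> real)" where
  "fadd u v = (\<lambda>z. Sup ({0} \<union> {\<alpha> \<in> {0..1}. z \<in> set_plus (fcut u \<alpha>) (fcut v \<alpha>)}))"

primrec fsum :: "(nat \<Rightarrow> ('a::euclidean_space \<Rightarrow> real)) \<Rightarrow> nat \<Rightarrow> ('a \<Rightarrow> real)" where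
  "fsum u 0 = indicator {0}"
| "fsum u (Suc n) = fadd (fsum u n) (u (Suc n))"

definition sendograph :: "('a::euclidean_space \<Rightarrow> real) \<Rightarrow> ('a \<times> real) set" where
  "sendograph u = {(x, \<alpha>). x \<in> fcut u 0 \<and> \<alpha> \<in> {0..1} \<and> u x \<ge> \<alpha>}"

definition hausdorff_semi :: "'b::metric_space set \<Rightarrow> 'b set \<Rightarrow> real" where
  "hausdorff_semi U V = (SUP a\<in>U. INF b\<in>V. dist a b)"

definition hausdorff_dist :: "'b::metric_space set \<Rightarrow> 'b set \<Rightarrow> real" where
  "hausdorff_dist U V = max (hausdorff_semi U V) (hausdorff_semi V U)"

definition send_dist :: "('a::euclidean_space \<Rightarrow> real) \<Rightarrow> ('a \<Rightarrow> real) \<Rightarrow> real" where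
  "send_dist u v = hausdorff_dist (sendograph u) (sendograph v)"

end

theory Submission imports Defs begin

lemma fn_cut_pos: "0 < \<alpha> \<Longrightarrow> fcut u \<alpha> = {x. u x \<ge> \<alpha>}"
  by (simp add: fcut_def)

lemma fn_props:
  assumes "fuzzy_number u" "0 \<le> \<alpha>" "\<alpha> \<le> 1"
  shows "fcut u \<alpha> \<noteq> {}" "compact (fcut u \<alpha>)" "convex (fcut u \<alpha>)"
  using assms unfolding fuzzy_number_def by auto

lemma fn_mono:
  assumes "fuzzy_number u" "0 \<le> \<beta>" "\<beta> \<le> \<alpha>"
  shows "fcut u \<alpha> \<subseteq> fcut u \<beta>"
proof (cases "\<beta> = 0")
  case True
  have "{x. \<alpha> \<le> u x} \<subseteq> {x. 0 < u x}" if "\<alpha> > 0" using that by auto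
  show ?thesis
  proof (cases "\<alpha> = 0")
    case False
    then have "\<alpha> > 0" using assms by auto
    then show ?thesis using True closure_subset by (fastforce simp: fcut_def)
  qed (use True in simp)
next
  case False
  then show ?thesis using assms by (auto simp: fcut_def)
qed

lemma set_plus_mono: "A \<subseteq> A' \<Longrightarrow> B \<subseteq> B' \<Longrightarrow> set_plus A B \<subseteq> set_plus A' B'"
  unfolding set_plus_def by blast

lemma set_plus_compact: "compact A \<Longrightarrow> compact B \<Longrightarrow> compact (set_plus A B)"
  unfolding set_plus_def by (rule compact_sums)

lemma set_plus_convex: "convex A \<Longrightarrow> convex B \<Longrightarrow> convex (set_plus A B)"
proof -
  assume "convex A" "convex B"
  then have "convex (\<Union>x\<in> A. \<Union>y \<in> B. {x + y})" by (rule convex_sums)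
  moreover have "(\<Union>x\<in> A. \<Union>y \<in> B. {x + y}) = set_plus A B" unfolding set_plus_def by blast
  ultimately show ?thesis by simp
qed

lemma set_plus_ne: "A \<noteq> {} \<Longrightarrow> B \<noteq> {} \<Longrightarrow> set_plus A B \<noteq> {}"
  unfolding set_plus_def by blast

lemma limit_lemma:
  assumes u: "fuzzy_number u" and v: "fuzzy_number v" and a: "0 < \<alpha>" "\<alpha> \<le> 1"
    and h: "\<And>\<beta>. 0 < \<beta> \<Longrightarrow> \<beta> < \<alpha> \<Longrightarrow> z \<in> set_plus (fcut u \<beta>) (fcut v \<beta>)"
  shows "z \<in> set_plus (fcut u \<alpha>) (fcut v \<alpha>)"
proof -
  define b where "b k = \<alpha> - \<alpha>/2 * inverse (real (Suc k))" for k
  have binv: "0 < inverse (real (Suc k))" "inverse (real (Suc k)) \<le> 1" for k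
    by (auto simp: field_simps)
  have bpos: "\<alpha>/2 \<le> b k" "b k < \<alpha>" for k
    using binv[of k] a unfolding b_def by (auto simp: field_simps mult_le_cancel_left1)
  have bmono: "b m \<le> b k" if "m \<le> k" for m k
  proof -
    have "inverse (real (Suc k)) \<le> inverse (real (Suc m))" using that by (simp add: field_simps)
    then show ?thesis unfolding b_def using a by (simp add: mult_left_mono)
  qed
  have blim: "b \<longlonglongrightarrow> \<alpha>"
  proof -
    have "(\<lambda>k. \<alpha> - \<alpha>/2 * inverse (real (Suc k))) \<longlonglongrightarrow> \<alpha> - \<alpha>/2 * 0"
      by (intro tendsto_intros LIMSEQ_inverse_real_of_nat)
    then show ?thesis unfolding b_def by simp
  qed
  have "\<exists>x. x \<in> fcut u (b k) \<and> z - x \<in> fcut v (b k)" for k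
  proof -
    have "z \<in> set_plus (fcut u (b k)) (fcut v (b k))" using h bpos[of k] a by force
    then obtain x y where "z = x + y" "x \<in> fcut u (b k)" "y \<in> fcut v (b k)"
      unfolding set_plus_def by blast
    then show ?thesis by (intro exI[of _ x]) auto
  qed
  then obtain X where X: "\<And>k. X k \<in> fcut u (b k)" "\<And>k. z - X k \<in> fcut v (b k)" by metis
  have "compact (fcut u (\<alpha>/2))" using fn_props[OF u, of "\<alpha>/2"] a by auto
  moreover have "X k \<in> fcut u (\<alpha>/2)" for k
    using fn_mono[OF u, of "\<alpha>/2" "b k"] bpos[of k] X a by auto
  ultimately obtain x r where r: "strict_mono r" "(X \<circ> r) \<longlonglongrightarrow> x"
    using compact_imp_seq_compact unfolding seq_compact_def by metis
  have ylim: "((\<lambda>k. z - X k) \<circ> r) \<longlonglongrightarrow> z - x"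
    using r(2) by (auto simp: o_def intro!: tendsto_intros)
  have inlim: "l \<in> fcut w (b m)"
    if w: "fuzzy_number w" and Y: "\<And>k. Y k \<in> fcut w (b k)" and l: "(Y \<circ> r) \<longlonglongrightarrow> l" for w Y l m
  proof (rule Lim_in_closed_set[OF _ _ _ l])
    show "closed (fcut w (b m))" using fn_props[OF w, of "b m"] bpos[of m] a
      by (auto intro: compact_imp_closed)
    show "\<forall>\<^sub>F k in sequentially. (Y \<circ> r) k \<in> fcut w (b m)"
      unfolding eventually_sequentially
    proof (intro exI allI impI)
      fix k assume "m \<le> k"
      then have "m \<le> r k" using r(1) seq_suble order_trans by blast
      then show "(Y \<circ> r) k \<in> fcut w (b m)"
        using fn_mono[OF w, of "b m" "b (r k)"] bmono[of m "r k"] bpos[of m] a Y[of "r k"] by auto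
    qed
  qed simp
  have final: "l \<in> fcut w \<alpha>" if "\<And>m. l \<in> fcut w (b m)" for w l
  proof -
    have "b m \<le> w l" for m using that[of m] bpos[of m] a by (auto simp: fcut_def)
    then have "\<alpha> \<le> w l" using LIMSEQ_le_const2[OF blim] by blast
    then show ?thesis using a by (simp add: fcut_def)
  qed
  have "x \<in> fcut u \<alpha>" using final inlim[OF u X(1) r(2)] by blast
  moreover have "z - x \<in> fcut v \<alpha>" using final inlim[OF v X(2) ylim] by blast
  ultimately show ?thesis unfolding set_plus_def by force
qed


lemma fadd_bounds: "0 \<le> fadd u v z" "fadd u v z \<le> 1"
proof -
  let ?S = "{0} \<union> {\<alpha> \<in> {0..1::real}. z \<in> set_plus (fcut u \<alpha>) (fcut v \<alpha>)}"
  have bdd: "bdd_above ?S" by (rule bdd_aboveI[of _ 1]) auto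
  show "0 \<le> fadd u v z" unfolding fadd_def by (rule cSup_upper[OF _ bdd]) simp
  show "fadd u v z \<le> 1" unfolding fadd_def by (rule cSup_least) auto
qed

lemma fadd_ge:
  assumes u: "fuzzy_number u" and v: "fuzzy_number v" and a: "0 < \<alpha>" "\<alpha> \<le> 1"
  shows "\<alpha> \<le> fadd u v z \<longleftrightarrow> z \<in> set_plus (fcut u \<alpha>) (fcut v \<alpha>)"
proof -
  let ?S = "{0} \<union> {\<alpha> \<in> {0..1::real}. z \<in> set_plus (fcut u \<alpha>) (fcut v \<alpha>)}"
  have bdd: "bdd_above ?S" by (rule bdd_aboveI[of _ 1]) auto
  show ?thesis
  proof
    assume h: "\<alpha> \<le> fadd u v z"
    show "z \<in> set_plus (fcut u \<alpha>) (fcut v \<alpha>)"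
    proof (rule limit_lemma[OF u v a])
      fix \<beta> assume b: "0 < \<beta>" "\<beta> < \<alpha>"
      then have "\<beta> < Sup ?S" using h unfolding fadd_def by simp
      then obtain s where s: "s \<in> ?S" "\<beta> < s" using less_cSup_iff[OF _ bdd] by blast
      then have "s \<noteq> 0" using b by auto
      then have "z \<in> set_plus (fcut u s) (fcut v s)" "0 \<le> s" using s by auto
      then show "z \<in> set_plus (fcut u \<beta>) (fcut v \<beta>)"
        using set_plus_mono[OF fn_mono[OF u, of \<beta> s] fn_mono[OF v, of \<beta> s]] b s by auto
    qed
  next
    assume "z \<in> set_plus (fcut u \<alpha>) (fcut v \<alpha>)"
    then have "\<alpha> \<in> ?S" using a by auto
    then show "\<alpha> \<le> fadd u v z" unfolding fadd_def by (rule cSup_upper[OF _ bdd])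
  qed
qed

lemma fadd_cut0:
  assumes u: "fuzzy_number u" and v: "fuzzy_number v"
  shows "fcut (fadd u v) 0 = set_plus (fcut u 0) (fcut v 0)"
proof -
  have pos: "{z. 0 < fadd u v z} = (\<Union>\<alpha>\<in>{0<..1}. set_plus (fcut u \<alpha>) (fcut v \<alpha>))"
  proof safe
    fix z assume "0 < fadd u v z"
    then show "z \<in> (\<Union>\<alpha>\<in>{0<..1}. set_plus (fcut u \<alpha>) (fcut v \<alpha>))"
      using fadd_ge[OF u v, of "fadd u v z" z] fadd_bounds[of u v z] by auto
  next
    fix z \<alpha> assume "\<alpha> \<in> {0<..1::real}" "z \<in> set_plus (fcut u \<alpha>) (fcut v \<alpha>)"
    then show "0 < fadd u v z" using fadd_ge[OF u v, of \<alpha> z] by auto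
  qed
  have cl: "closed (set_plus (fcut u 0) (fcut v 0))"
    using fn_props[OF u, of 0] fn_props[OF v, of 0]
    by (auto intro!: compact_imp_closed set_plus_compact)
  show ?thesis
  proof
    have "(\<Union>\<alpha>\<in>{0<..1}. set_plus (fcut u \<alpha>) (fcut v \<alpha>)) \<subseteq> set_plus (fcut u 0) (fcut v 0)"
    proof (rule UN_least)
      fix \<alpha> :: real assume "\<alpha> \<in> {0<..1}"
      then show "set_plus (fcut u \<alpha>) (fcut v \<alpha>) \<subseteq> set_plus (fcut u 0) (fcut v 0)"
        using set_plus_mono[OF fn_mono[OF u, of 0 \<alpha>] fn_mono[OF v, of 0 \<alpha>]] by simp
    qed
    then show "fcut (fadd u v) 0 \<subseteq> set_plus (fcut u 0) (fcut v 0)"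
      unfolding fcut_def[of "fadd u v"] using pos closure_minimal[OF _ cl] by simp
  next
    show "set_plus (fcut u 0) (fcut v 0) \<subseteq> fcut (fadd u v) 0"
    proof
      fix z assume "z \<in> set_plus (fcut u 0) (fcut v 0)"
      then obtain x y where z: "z = x + y" "x \<in> closure {x. 0 < u x}" "y \<in> closure {x. 0 < v x}"
        unfolding set_plus_def fcut_def by auto
      obtain X where X: "\<And>n. 0 < u (X n)" "X \<longlonglongrightarrow> x" using z(2) unfolding closure_sequential by auto
      obtain Y where Y: "\<And>n. 0 < v (Y n)" "Y \<longlonglongrightarrow> y" using z(3) unfolding closure_sequential by auto
      have "X n + Y n \<in> {z. 0 < fadd u v z}" for n
      proof -
        let ?m = "min (u (X n)) (v (Y n))"
        have "u (X n) \<le> 1" "v (Y n) \<le> 1" using u v unfolding fuzzy_number_def by auto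
        then have m: "0 < ?m" "?m \<le> 1" using X Y by auto
        have "X n \<in> fcut u ?m" "Y n \<in> fcut v ?m" using m by (auto simp: fcut_def)
        then have "X n + Y n \<in> set_plus (fcut u ?m) (fcut v ?m)" unfolding set_plus_def by blast
        then show ?thesis unfolding pos using m by auto
      qed
      moreover have "(\<lambda>n. X n + Y n) \<longlonglongrightarrow> z" using tendsto_add[OF X(2) Y(2)] z(1) by simp
      ultimately have "z \<in> closure {z. 0 < fadd u v z}" unfolding closure_sequential by (intro exI[of _ "\<lambda>n. X n + Y n"]) simp
      then show "z \<in> fcut (fadd u v) 0" by (simp add: fcut_def)
    qed
  qed
qed

lemma fadd_cut:
  assumes u: "fuzzy_number u" and v: "fuzzy_number v" and a: "0 \<le> \<alpha>" "\<alpha> \<le> 1"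
  shows "fcut (fadd u v) \<alpha> = set_plus (fcut u \<alpha>) (fcut v \<alpha>)"
proof (cases "\<alpha> = 0")
  case True then show ?thesis using fadd_cut0[OF u v] by simp
next
  case False
  then have "0 < \<alpha>" using a by auto
  then show ?thesis using fadd_ge[OF u v _ a(2)] by (auto simp: fn_cut_pos)
qed

lemma fadd_fn:
  assumes u: "fuzzy_number u" and v: "fuzzy_number v"
  shows "fuzzy_number (fadd u v)"
  unfolding fuzzy_number_def
proof (intro conjI allI ballI)
  fix \<alpha> :: real assume a: "\<alpha> \<in> {0..1}"
  then have a': "0 \<le> \<alpha>" "\<alpha> \<le> 1" by auto
  show "fcut (fadd u v) \<alpha> \<noteq> {}" unfolding fadd_cut[OF u v a']
    using fn_props[OF u a'] fn_props[OF v a'] by (intro set_plus_ne)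
  show "compact (fcut (fadd u v) \<alpha>)" unfolding fadd_cut[OF u v a']
    using fn_props[OF u a'] fn_props[OF v a'] by (intro set_plus_compact)
  show "convex (fcut (fadd u v) \<alpha>)" unfolding fadd_cut[OF u v a']
    using fn_props[OF u a'] fn_props[OF v a'] by (intro set_plus_convex)
qed (use fadd_bounds in auto)

lemma zero_fn: "fuzzy_number (indicator {0} :: 'a::euclidean_space \<Rightarrow> real)"
proof -
  have c: "fcut (indicator {0} :: 'a \<Rightarrow> real) \<alpha> = {0}" if "0 \<le> \<alpha>" "\<alpha> \<le> 1" for \<alpha>
  proof (cases "\<alpha> = 0")
    case True
    have "{x::'a. 0 < (indicator {0} x :: real)} = {0}" by (auto simp: indicator_def)
    then show ?thesis using True by (simp add: fcut_def)
  next
    case False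
    then show ?thesis using that by (auto simp: fcut_def indicator_def)
  qed
  show ?thesis unfolding fuzzy_number_def using c by (auto simp: indicator_def)
qed


lemma send_iff:
  assumes u: "fuzzy_number u"
  shows "(x, \<alpha>) \<in> sendograph u \<longleftrightarrow> 0 \<le> \<alpha> \<and> \<alpha> \<le> 1 \<and> x \<in> fcut u \<alpha>"
proof (cases "\<alpha> = 0")
  case True
  then show ?thesis using u unfolding sendograph_def fuzzy_number_def by auto
next
  case False
  show ?thesis
  proof
    assume "(x, \<alpha>) \<in> sendograph u"
    then show "0 \<le> \<alpha> \<and> \<alpha> \<le> 1 \<and> x \<in> fcut u \<alpha>" using False by (auto simp: sendograph_def fcut_def)
  next
    assume h: "0 \<le> \<alpha> \<and> \<alpha> \<le> 1 \<and> x \<in> fcut u \<alpha>"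
    then have "x \<in> fcut u 0" using fn_mono[OF u, of 0 \<alpha>] by auto
    then show "(x, \<alpha>) \<in> sendograph u" using h False by (auto simp: sendograph_def fcut_def)
  qed
qed

lemma send_bounded:
  assumes u: "fuzzy_number u"
  shows "bounded (sendograph u)"
proof -
  have "sendograph u \<subseteq> fcut u 0 \<times> {0..1}" unfolding sendograph_def by auto
  moreover have "compact (fcut u 0 \<times> {0..1::real})" using fn_props[OF u, of 0]
    by (intro compact_Times) auto
  ultimately show ?thesis using compact_imp_bounded bounded_subset by blast
qed

lemma send_ne:
  assumes u: "fuzzy_number u"
  shows "sendograph u \<noteq> {}"
proof -
  obtain x where "x \<in> fcut u 0" using fn_props[OF u, of 0] by auto
  then have "(x, 0) \<in> sendograph u" using send_iff[OF u] by auto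
  then show ?thesis by auto
qed

lemma H1:
  fixes U V :: "'b::real_normed_vector set"
  assumes "bounded U" "bounded V" "V \<noteq> {}" "p \<in> U"
  shows "(INF q\<in>V. dist p q) \<le> hausdorff_semi U V"
proof -
  obtain q0 where q0: "q0 \<in> V" using assms by auto
  obtain B1 where B1: "\<forall>x\<in>U. norm x \<le> B1" using assms(1) bounded_iff by blast
  have bb: "bdd_below ((\<lambda>q. dist a q) ` V)" for a by (rule bdd_belowI[of _ 0]) auto
  have "(INF q\<in>V. dist a q) \<le> B1 + norm q0" if "a \<in> U" for a
  proof -
    have "(INF q\<in>V. dist a q) \<le> dist a q0" by (rule cINF_lower[OF bb q0])
    also have "\<dots> \<le> norm a + norm q0" by (simp add: dist_norm norm_triangle_ineq4)
    finally show ?thesis using B1 that by auto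
  qed
  then have "bdd_above ((\<lambda>a. INF q\<in>V. dist a q) ` U)" by (intro bdd_aboveI[of _ "B1 + norm q0"]) auto
  then show ?thesis unfolding hausdorff_semi_def using assms(4) by (rule cSUP_upper2) simp
qed

lemma H2:
  assumes "V \<noteq> {}" "(INF q\<in>V. dist p q) \<le> d" "0 < e"
  shows "\<exists>q\<in>V. dist p q < d + e"
proof -
  have bb: "bdd_below ((\<lambda>q. dist p q) ` V)" by (rule bdd_belowI[of _ 0]) auto
  have "(INF q\<in>V. dist p q) < d + e" using assms by auto
  then show ?thesis using cINF_less_iff[OF assms(1) bb] by blast
qed

lemma H3:
  assumes "U \<noteq> {}" "V \<noteq> {}" "\<And>p e. p \<in> U \<Longrightarrow> 0 < e \<Longrightarrow> \<exists>q\<in>V. dist p q < d + e"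
  shows "hausdorff_semi U V \<le> d"
  unfolding hausdorff_semi_def
proof (rule cSUP_least[OF assms(1)])
  fix p assume p: "p \<in> U"
  have bb: "bdd_below ((\<lambda>q. dist p q) ` V)" by (rule bdd_belowI[of _ 0]) auto
  show "(INF q\<in>V. dist p q) \<le> d"
  proof (rule field_le_epsilon)
    fix e :: real assume "0 < e"
    then obtain q where "q \<in> V" "dist p q < d + e" using assms(3) p by blast
    then show "(INF q\<in>V. dist p q) \<le> d + e" using cINF_lower[OF bb, of q] by auto
  qed
qed

lemma G0:
  fixes x y x' y' :: "'a::real_normed_vector"
  shows "dist (x + y, \<alpha>::real) (x' + y', \<beta>) \<le> dist (x, \<alpha>) (x', \<beta>) + dist (y, \<alpha>) (y', \<gamma>)"
proof -
  have "(x + y, \<alpha>) - (x' + y', \<beta>) = ((x, \<alpha>) - (x', \<beta>)) + (y - y', 0)" by simp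
  then have "dist (x + y, \<alpha>) (x' + y', \<beta>) \<le> norm ((x, \<alpha>) - (x', \<beta>)) + norm (y - y', 0::real)"
    by (metis dist_norm norm_triangle_ineq)
  also have "norm (y - y', 0::real) = dist y y'" by (simp add: norm_Pair dist_norm)
  also have "dist y y' \<le> dist (y, \<alpha>) (y', \<gamma>)" using dist_fst_le[of "(y, \<alpha>)" "(y', \<gamma>)"] by simp
  finally show ?thesis by (simp add: dist_norm)
qed

lemma semi_add:
  assumes a: "fuzzy_number a" and b: "fuzzy_number b" and c: "fuzzy_number c" and d: "fuzzy_number d"
  shows "hausdorff_semi (sendograph (fadd a b)) (sendograph (fadd c d))
    \<le> hausdorff_semi (sendograph a) (sendograph c) + hausdorff_semi (sendograph b) (sendograph d)"
proof (rule H3)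
  show "sendograph (fadd a b) \<noteq> {}" using send_ne fadd_fn a b by blast
  show "sendograph (fadd c d) \<noteq> {}" using send_ne fadd_fn c d by blast
  fix p e assume p: "p \<in> sendograph (fadd a b)" and e: "(0::real) < e"
  obtain z \<alpha> where pz: "p = (z, \<alpha>)" by (cases p)
  then have al: "0 \<le> \<alpha>" "\<alpha> \<le> 1" "z \<in> fcut (fadd a b) \<alpha>" using p send_iff[OF fadd_fn[OF a b]] by auto
  then obtain x y where xy: "z = x + y" "x \<in> fcut a \<alpha>" "y \<in> fcut b \<alpha>"
    using fadd_cut[OF a b al(1,2)] unfolding set_plus_def by auto
  have px: "(x, \<alpha>) \<in> sendograph a" using send_iff[OF a] al xy by auto
  have py: "(y, \<alpha>) \<in> sendograph b" using send_iff[OF b] al xy by auto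
  have e2: "0 < e/2" using e by simp
  obtain q1 where q1: "q1 \<in> sendograph c" "dist (x, \<alpha>) q1 < hausdorff_semi (sendograph a) (sendograph c) + e/2"
    using H2[OF send_ne[OF c] H1[OF send_bounded[OF a] send_bounded[OF c] send_ne[OF c] px] e2] by blast
  obtain q2 where q2: "q2 \<in> sendograph d" "dist (y, \<alpha>) q2 < hausdorff_semi (sendograph b) (sendograph d) + e/2"
    using H2[OF send_ne[OF d] H1[OF send_bounded[OF b] send_bounded[OF d] send_ne[OF d] py] e2] by blast
  obtain x' \<beta> where q1e: "q1 = (x', \<beta>)" by (cases q1)
  obtain y' \<gamma> where q2e: "q2 = (y', \<gamma>)" by (cases q2)
  have b1: "0 \<le> \<beta>" "\<beta> \<le> 1" "x' \<in> fcut c \<beta>" using q1 q1e send_iff[OF c] by auto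
  have b2: "0 \<le> \<gamma>" "\<gamma> \<le> 1" "y' \<in> fcut d \<gamma>" using q2 q2e send_iff[OF d] by auto
  define \<delta> where "\<delta> = min \<beta> \<gamma>"
  have dl: "0 \<le> \<delta>" "\<delta> \<le> 1" using b1 b2 by (auto simp: \<delta>_def)
  have "x' \<in> fcut c \<delta>" using fn_mono[OF c, of \<delta> \<beta>] b1 dl by (auto simp: \<delta>_def)
  moreover have "y' \<in> fcut d \<delta>" using fn_mono[OF d, of \<delta> \<gamma>] b2 dl by (auto simp: \<delta>_def)
  ultimately have "x' + y' \<in> fcut (fadd c d) \<delta>" using fadd_cut[OF c d dl] unfolding set_plus_def by blast
  then have qin: "(x' + y', \<delta>) \<in> sendograph (fadd c d)" using send_iff[OF fadd_fn[OF c d]] dl by auto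
  have "dist (x + y, \<alpha>) (x' + y', \<delta>) \<le> dist (x, \<alpha>) (x', \<beta>) + dist (y, \<alpha>) (y', \<gamma>)"
  proof (cases "\<beta> \<le> \<gamma>")
    case True then show ?thesis using G0[of x y \<alpha> x' y' \<beta> \<gamma>] by (simp add: \<delta>_def)
  next
    case False
    then have "\<delta> = \<gamma>" by (simp add: \<delta>_def)
    then show ?thesis using G0[of y x \<alpha> y' x' \<gamma> \<beta>] by (simp add: add.commute)
  qed
  then have "dist p (x' + y', \<delta>) < hausdorff_semi (sendograph a) (sendograph c) + hausdorff_semi (sendograph b) (sendograph d) + e"
    using q1 q2 q1e q2e pz xy by auto
  then show "\<exists>q\<in>sendograph (fadd c d). dist p q < hausdorff_semi (sendograph a) (sendograph c) + hausdorff_semi (sendograph b) (sendograph d) + e"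
    using qin by blast
qed

lemma dist_add:
  assumes a: "fuzzy_number a" and b: "fuzzy_number b" and c: "fuzzy_number c" and d: "fuzzy_number d"
  shows "send_dist (fadd a b) (fadd c d) \<le> send_dist a c + send_dist b d"
  unfolding send_dist_def hausdorff_dist_def
  using semi_add[OF a b c d] semi_add[OF c d a b] by linarith

lemma send_dist_self:
  assumes a: "fuzzy_number a"
  shows "send_dist a a \<le> 0"
proof -
  have "hausdorff_semi (sendograph a) (sendograph a) \<le> 0"
    by (rule H3[OF send_ne[OF a] send_ne[OF a]]) (metis dist_eq_0_iff add_0)
  then show ?thesis unfolding send_dist_def hausdorff_dist_def by simp
qed

theorem main:
  fixes u v :: "nat \<Rightarrow> ('a::euclidean_space \<Rightarrow> real)" and n :: nat
  assumes "\<And>j. j \<in> {1..n} \<Longrightarrow> fuzzy_number (u j)"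
    and "\<And>j. j \<in> {1..n} \<Longrightarrow> fuzzy_number (v j)"
  shows "fuzzy_number (fsum u n) \<and> fuzzy_number (fsum v n) \<and>
    send_dist (fsum u n) (fsum v n) \<le> (\<Sum>j=1..n. send_dist (u j) (v j))"
  using assms
proof (induction n)
  case 0
  then show ?case using zero_fn send_dist_self[OF zero_fn] by simp
next
  case (Suc n)
  then have IH: "fuzzy_number (fsum u n)" "fuzzy_number (fsum v n)"
      "send_dist (fsum u n) (fsum v n) \<le> (\<Sum>j=1..n. send_dist (u j) (v j))" by auto
  have un: "fuzzy_number (u (Suc n))" "fuzzy_number (v (Suc n))" using Suc.prems by auto
  show ?case using fadd_fn[OF IH(1) un(1)] fadd_fn[OF IH(2) un(2)]
      dist_add[OF IH(1) un(1) IH(2) un(2)] IH(3)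
    by (simp add: sum.cl_ivl_Suc)
qed

theorem theorem2p4:
  fixes u v :: "nat \<Rightarrow> ('a::euclidean_space \<Rightarrow> real)" and n :: nat
  assumes "n \<ge> 1"
    and "\<And>j. j \<in> {1..n} \<Longrightarrow> fuzzy_number (u j)"
    and "\<And>j. j \<in> {1..n} \<Longrightarrow> fuzzy_number (v j)"
  shows "send_dist (fsum u n) (fsum v n) \<le> (\<Sum>j=1..n. send_dist (u j) (v j))"
  using main[of n u v] assms(2,3) by blast

end
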